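(* The functions $f_k(z)=(1-z)\sum_{j=0}^{\infty}\frac{1}{(j+1)^k}z^j=1+\sum_{j=1}^\infty\left(\frac{1}{(j+1)^k}-\frac{1}{j^k}\right)z^j$, $k\in\mathbb{N}$ ($k\geq1$), span a dense subspace of $H^2$.
   Context: $H^2$ denotes the Hardy space of analytic functions $f(z)=\sum_{j\ge0}\hat f(j)z^j$ on the open unit disk with $\|f\|^2=\sum_{j}|\hat f(j)|^2<\infty$. *)

theory Defs
  imports "HOL-Complex_Analysis.Complex_Analysis"
begin

definition taylor_coeff :: "(complex \<Rightarrow> complex) \<Rightarrow> nat \<Rightarrow> complex" where
  "taylor_coeff f j = (deriv ^^ j) f 0 / of_nat (fact j)"

definition hardy2 :: "(complex \<Rightarrow> complex) set" where
  "hardy2 = {f. f holomorphic_on ball 0 1 \<and>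
                summable (\<lambda>j. (norm (taylor_coeff f j))\<^sup>2)}"

definition h2_norm :: "(complex \<Rightarrow> complex) \<Rightarrow> real" where
  "h2_norm f = sqrt (\<Sum>j. (norm (taylor_coeff f j))\<^sup>2)"

definition fk :: "nat \<Rightarrow> complex \<Rightarrow> complex" where
  "fk k z = (1 - z) * (\<Sum>j. z ^ j / of_nat ((j + 1) ^ k))"

end

theory Submission
  imports Defs
begin



lemma coeff_from_sums:
  assumes "\<And>z. z \<in> ball 0 1 \<Longrightarrow> (\<lambda>n. e n * z ^ n) sums h z"
  shows "taylor_coeff h n = e n"
proof -
  have ev: "eventually (\<lambda>u. (\<lambda>n. fps_nth (Abs_fps e) n * u ^ n) sums h u) (nhds 0)"
    using assms by (intro eventually_nhds_in_open[THEN eventually_mono, of "ball 0 1"]) auto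
  have "h has_fps_expansion Abs_fps e"
    by (rule has_fps_expansionI[OF ev])
  from fps_nth_fps_expansion[OF this, of n] show ?thesis
    by (simp add: taylor_coeff_def)
qed

lemma taylor_sums:
  assumes "f holomorphic_on ball 0 1" "z \<in> ball 0 1"
  shows "(\<lambda>j. taylor_coeff f j * z ^ j) sums f z"
  using holomorphic_power_series[OF assms] by (simp add: taylor_coeff_def)

definition xx :: "nat \<Rightarrow> complex" where "xx j = 1 / of_nat (Suc j)"

definition DD :: "nat \<Rightarrow> nat \<Rightarrow> complex" where
  "DD k j = xx j ^ k - (if j = 0 then 0 else xx (j - 1) ^ k)"

lemma fk_sums:
  assumes "z \<in> ball 0 1"
  shows "(\<lambda>j. DD k j * z ^ j) sums fk k z"
proof -
  have nz: "norm z < 1" using assms by simp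
  have eq: "z ^ j / of_nat ((j + 1) ^ k) = xx j ^ k * z ^ j" for j
    by (simp add: xx_def power_divide field_simps)
  have sm: "summable (\<lambda>j. z ^ j / of_nat ((j + 1) ^ k))"
  proof (rule summable_comparison_test[of _ "\<lambda>j. norm z ^ j"])
    show "\<exists>N. \<forall>n\<ge>N. norm (z ^ n / of_nat ((n + 1) ^ k)) \<le> norm z ^ n"
    proof (intro exI[of _ 0] allI impI)
      fix n :: nat
      have r1: "real ((n+1)^k) \<ge> 1" by (metis One_nat_def Suc_leI of_nat_1 of_nat_le_iff zero_less_Suc zero_less_power Suc_eq_plus1)
      have "norm (z ^ n / of_nat ((n + 1) ^ k)) = norm z ^ n / real ((n+1)^k)"
        by (simp only: norm_divide norm_power norm_of_nat)
      also have "\<dots> \<le> norm z ^ n"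
        using r1 by (simp add: divide_le_eq mult_le_cancel_left1)
      finally show "norm (z ^ n / of_nat ((n + 1) ^ k)) \<le> norm z ^ n" .
    qed
    show "summable (\<lambda>j. norm z ^ j)" using nz by (simp add: summable_geometric)
  qed
  have s1: "(\<lambda>j. xx j ^ k * z ^ j) sums (\<Sum>j. z ^ j / of_nat ((j + 1) ^ k))"
  proof -
    have "(\<lambda>j. xx j ^ k * z ^ j) = (\<lambda>j. z ^ j / of_nat ((j + 1) ^ k))" using eq by auto
    then show ?thesis using sm summable_sums by metis
  qed
  from s1 have s1': "(\<lambda>j. z * (xx j ^ k * z ^ j)) sums (z * (\<Sum>j. z ^ j / of_nat ((j + 1) ^ k)))"
    by (rule sums_mult)
  have s2: "(\<lambda>j. (if j = 0 then 0 else xx (j - 1) ^ k) * z ^ j) sums (z * (\<Sum>j. z ^ j / of_nat ((j + 1) ^ k)))" if "(\<lambda>j. z * (xx j ^ k * z ^ j)) sums (z * (\<Sum>j. z ^ j / of_nat ((j + 1) ^ k)))"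
  proof -
    let ?F = "\<lambda>j. (if j = 0 then 0 else xx (j - 1) ^ k) * z ^ j"
    have "(\<lambda>n. ?F (Suc n)) sums (z * (\<Sum>j. z ^ j / of_nat ((j + 1) ^ k)))"
      using that by (simp add: algebra_simps)
    from sums_Suc_iff[THEN iffD1, OF this] show ?thesis by simp
  qed
  from sums_diff[OF s1 s2[OF s1']] show ?thesis
    by (simp add: DD_def fk_def algebra_simps)
qed

lemma xx_real: "xx j = of_real (1 / real (Suc j))"
  by (simp add: xx_def)

lemma xx_diff_le: "norm (xx j - xx i) \<le> 1"
proof -
  have "norm (xx j - xx i) = \<bar>1 / real (Suc j) - 1 / real (Suc i)\<bar>"
    unfolding xx_real of_real_diff[symmetric] norm_of_real ..
  also have "\<dots> \<le> 1"
  proof -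
    have a: "0 < 1 / real (Suc n)" "1 / real (Suc n) \<le> 1" for n by auto
    show ?thesis using a[of i] a[of j] by linarith
  qed
  finally show ?thesis .
qed

lemma xx_inj: "xx i = xx j \<Longrightarrow> i = j"
  by (simp add: xx_def)

lemma poly_repr:
  fixes P :: "complex poly"
  assumes "coeff P 0 = 0"
  shows "\<exists>n c. \<forall>y. poly P y = (\<Sum>k\<in>{1..n}. c k * y ^ k)"
proof (intro exI allI)
  fix y
  have "poly P y = (\<Sum>i\<le>degree P. coeff P i * y ^ i)" by (rule poly_altdef)
  also have "\<dots> = coeff P 0 * y ^ 0 + (\<Sum>i\<in>{1..degree P}. coeff P i * y ^ i)"
    by (simp add: atMost_atLeast0 sum.atLeast_Suc_atMost)
  finally show "poly P y = (\<Sum>k\<in>{1..degree P}. coeff P k * y ^ k)" using assms by simp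
qed


lemma interp:
  fixes t :: "nat \<Rightarrow> complex" and L :: nat and \<eta> :: real
  assumes L: "L \<ge> 1" and eta: "\<eta> > 0"
  shows "\<exists>n c. (\<forall>j<L. (\<Sum>k\<in>{1..n}. c k * xx j ^ k) = t j) \<and>
           (\<forall>j\<ge>L. norm (\<Sum>k\<in>{1..n}. c k * xx j ^ k) \<le> \<eta> / real (Suc j))"
proof -
  define A where "A m = {..<L} - {m}" for m
  define l where "l m y = (\<Prod>i\<in>A m. (y - xx i) / (xx m - xx i))" for m y
  define B where "B m = (\<Prod>i\<in>A m. 1 / norm (xx m - xx i))" for m
  define C where "C = (\<Sum>m<L. norm (t m) * B m)"
  define q where "q = real L / real (Suc L)"
  have B0: "B m \<ge> 0" for m unfolding B_def by (intro prod_nonneg) auto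
  have C0: "C \<ge> 0" unfolding C_def using B0 by (intro sum_nonneg mult_nonneg_nonneg) auto
  have q1: "q < 1" "q \<ge> 0" unfolding q_def by auto
  have pos: "\<eta> / (C * real L + 1) > 0" using eta C0 by (simp add: add_nonneg_pos)
  obtain K' where K': "q ^ K' < \<eta> / (C * real L + 1)"
    using real_arch_pow_inv[OF pos q1(1)] by blast
  define K where "K = Suc K'"
  define P where "P = (\<Sum>m<L. smult (t m * of_nat (Suc m) ^ K)
      (monom 1 K * (\<Prod>i\<in>A m. [: - xx i / (xx m - xx i), 1 / (xx m - xx i) :])))"
  have fac: "poly [: - (a / d), 1 / d :] y = (y - a) / d" for a d y :: complex
    by (simp add: diff_divide_distrib)
  have polyP: "poly P y = (\<Sum>m<L. t m * of_nat (Suc m) ^ K * (y ^ K * l m y))" for y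
    unfolding P_def l_def by (simp add: poly_sum poly_prod poly_monom fac del: poly_pCons)
  have c0: "coeff P 0 = 0" unfolding P_def K_def by (simp add: coeff_sum coeff_monom_mult)
  obtain n c where rep: "\<And>y. poly P y = (\<Sum>k\<in>{1..n}. c k * y ^ k)"
    using poly_repr[OF c0] by blast
  have lj: "l m (xx j) = (if m = j then 1 else 0)" if "j < L" "m < L" for m j
  proof (cases "m = j")
    case True
    have "l m (xx j) = (\<Prod>i\<in>A m. 1)" unfolding l_def True
    proof (intro prod.cong refl)
      fix i assume "i \<in> A j"
      then have "xx j - xx i \<noteq> 0" using xx_inj by (force simp: A_def)
      then show "(xx j - xx i) / (xx j - xx i) = 1" by simp
    qed
    then show ?thesis using True by simp
  next
    case False
    have "j \<in> A m" using that False by (auto simp: A_def)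
    then have "l m (xx j) = 0" unfolding l_def by (intro prod_zero) (auto simp: A_def)
    then show ?thesis using False by simp
  qed
  have interp: "poly P (xx j) = t j" if "j < L" for j
  proof -
    have "poly P (xx j) = (\<Sum>m<L. if m = j then t m * of_nat (Suc m) ^ K * xx j ^ K else 0)"
      unfolding polyP using lj that by (intro sum.cong) auto
    also have "\<dots> = t j * of_nat (Suc j) ^ K * xx j ^ K" using that by simp
    also have "\<dots> = t j * (of_nat (Suc j) * xx j) ^ K" by (simp add: power_mult_distrib)
    also have "\<dots> = t j" by (simp add: xx_def del: of_nat_Suc)
    finally show ?thesis .
  qed
  have bound: "norm (poly P (xx j)) \<le> \<eta> / real (Suc j)" if "j \<ge> L" for j
  proof -
    have lb: "norm (l m (xx j)) \<le> B m" for m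
      unfolding l_def B_def prod_norm[symmetric] norm_divide
      by (intro prod_mono) (auto simp: divide_right_mono xx_diff_le)
    have nx: "norm (xx j) = 1 / real (Suc j)" by (simp add: xx_def norm_divide del: of_nat_Suc)
    have "norm (poly P (xx j)) \<le> (\<Sum>m<L. norm (t m * of_nat (Suc m) ^ K * (xx j ^ K * l m (xx j))))"
      unfolding polyP by (rule norm_sum)
    also have "\<dots> \<le> (\<Sum>m<L. norm (t m) * B m * (real L / real (Suc j)) ^ K)"
    proof (intro sum_mono)
      fix m assume m: "m \<in> {..<L}"
      have "norm (t m * of_nat (Suc m) ^ K * (xx j ^ K * l m (xx j)))
          = norm (t m) * ((real (Suc m) * (1 / real (Suc j))) ^ K) * norm (l m (xx j))"
        by (simp add: norm_mult norm_power nx power_mult_distrib[symmetric] del: of_nat_Suc)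
      also have "\<dots> \<le> norm (t m) * ((real L / real (Suc j)) ^ K) * B m"
      proof (intro mult_mono mult_left_mono power_mono lb)
        show "real (Suc m) * (1 / real (Suc j)) \<le> real L / real (Suc j)"
          using m by (simp add: divide_right_mono del: of_nat_Suc)
      qed auto
      finally show "norm (t m * of_nat (Suc m) ^ K * (xx j ^ K * l m (xx j)))
          \<le> norm (t m) * B m * (real L / real (Suc j)) ^ K" by (simp add: algebra_simps)
    qed
    also have "\<dots> = C * (real L / real (Suc j)) ^ K" by (simp add: C_def sum_distrib_right)
    also have "\<dots> = C * (real L / real (Suc j)) ^ K' * (real L / real (Suc j))"
      by (simp add: K_def)
    also have "\<dots> \<le> C * q ^ K' * (real L / real (Suc j))"
    proof (intro mult_right_mono mult_left_mono power_mono C0)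
      show "real L / real (Suc j) \<le> q" unfolding q_def using that
        by (intro divide_left_mono) auto
    qed auto
    also have "\<dots> = (C * real L) * q ^ K' / real (Suc j)" by simp
    also have "\<dots> \<le> \<eta> / real (Suc j)"
    proof (intro divide_right_mono)
      have "(C * real L) * q ^ K' \<le> (C * real L + 1) * q ^ K'"
        using q1 by (intro mult_right_mono) auto
      also have "\<dots> \<le> \<eta>"
      proof -
        have p: "C * real L + 1 > 0" using C0 by (simp add: add_nonneg_pos)
        from K' have "q ^ K' * (C * real L + 1) < \<eta>" using p by (simp add: less_divide_eq)
        then show ?thesis by (simp add: mult.commute)
      qed
      finally show "(C * real L) * q ^ K' \<le> \<eta>" .
    qed auto
    finally show ?thesis .
  qed
  show ?thesis
    using interp bound unfolding rep by blast
qed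


lemma sq3: "(a + b + c)\<^sup>2 \<le> 3 * (a\<^sup>2 + b\<^sup>2 + (c::real)\<^sup>2)"
proof -
  have e: "3 * (a\<^sup>2 + b\<^sup>2 + c\<^sup>2) - (a + b + c)\<^sup>2 = (a - b)\<^sup>2 + (b - c)\<^sup>2 + (a - c)\<^sup>2"
    by (simp add: power2_eq_square algebra_simps)
  have "0 \<le> (a - b)\<^sup>2 + (b - c)\<^sup>2 + (a - c)\<^sup>2" by simp
  then have "0 \<le> 3 * (a\<^sup>2 + b\<^sup>2 + c\<^sup>2) - (a + b + c)\<^sup>2" by (simp only: e)
  then show ?thesis by simp
qed

lemma core:
  fixes b :: "nat \<Rightarrow> complex" and \<epsilon> :: real
  assumes sb: "summable (\<lambda>j. (norm (b j))\<^sup>2)" and ep: "\<epsilon> > 0"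
  shows "\<exists>n c. summable (\<lambda>j. (norm (b j - (\<Sum>k\<in>{1..n}. c k * DD k j)))\<^sup>2) \<and>
           (\<Sum>j. (norm (b j - (\<Sum>k\<in>{1..n}. c k * DD k j)))\<^sup>2) < \<epsilon>\<^sup>2"
proof -
  define e2 where "e2 = \<epsilon>\<^sup>2"
  have e2: "e2 > 0" using ep by (simp add: e2_def)
  obtain M where M: "norm (\<Sum>i. (norm (b (i + M)))\<^sup>2) < e2 / 9"
  proof -
    have "e2 / 9 > 0" using e2 by simp
    from suminf_exist_split[OF this sb] obtain N0 where "\<forall>n\<ge>N0. norm (\<Sum>i. (norm (b (i + n)))\<^sup>2) < e2 / 9" by blast
    then show ?thesis using that by blast
  qed
  define SM where "SM = (\<Sum>i. (norm (b (i + M)))\<^sup>2)"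
  have SM: "SM < e2 / 9" using M unfolding SM_def
    by simp
  define \<beta> where "\<beta> = (\<Sum>i<M. b i)"
  define N where "N = nat \<lceil>9 * (norm \<beta>)\<^sup>2 / e2\<rceil> + 1"
  have N1: "N \<ge> 1" by (simp add: N_def)
  have NB: "3 * ((norm \<beta>)\<^sup>2 / real N) < e2 / 3"
  proof -
    have "9 * (norm \<beta>)\<^sup>2 / e2 < real N" unfolding N_def by linarith
    then have "9 * (norm \<beta>)\<^sup>2 < real N * e2" using e2 by (simp add: divide_less_eq)
    then show ?thesis using N1 by (simp add: divide_less_eq field_simps)
  qed
  define Z where "Z = (\<Sum>j. (1 / real (Suc j))\<^sup>2)"
  have sZ: "summable (\<lambda>j. (1 / real (Suc j))\<^sup>2)"
  proof -
    have "summable (\<lambda>n. inverse (real n ^ 2))" by (rule inverse_power_summable) simp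
    then have "summable (\<lambda>n. inverse (real (Suc n) ^ 2))" by (rule summable_Suc_iff[THEN iffD2])
    then show ?thesis by (simp add: power_one_over divide_inverse power_inverse del: of_nat_Suc)
  qed
  have Z0: "Z \<ge> 0" unfolding Z_def by (intro suminf_nonneg sZ) simp
  define \<eta> where "\<eta> = sqrt (e2 / (729 * (Z + 1)))"
  have eta: "\<eta> > 0" unfolding \<eta>_def using e2 Z0 by simp
  have etaZ: "27 * (9 * \<eta>\<^sup>2 * Z) \<le> e2 / 3"
  proof -
    have "\<eta>\<^sup>2 = e2 / (729 * (Z + 1))" unfolding \<eta>_def using e2 Z0 by simp
    then have "27 * (9 * \<eta>\<^sup>2 * Z) = e2 / 3 * (Z / (Z + 1))" using Z0 by (simp add: field_simps)
    also have "\<dots> \<le> e2 / 3 * 1" using Z0 e2 by (intro mult_left_mono) auto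
    finally show ?thesis by simp
  qed
  define L where "L = M + N"
  have L1: "L \<ge> 1" "M \<le> L" using N1 by (auto simp: L_def)
  define w where "w j = (if j < M then b j else if j < L then - \<beta> / of_nat N else 0)" for j
  define t where "t j = (\<Sum>i<Suc j. w i)" for j
  have tL: "t (L - 1) = 0"
  proof -
    have "Suc (L - 1) = L" using L1 by simp
    then have "t (L - 1) = (\<Sum>i<M+N. w i)" by (simp add: t_def L_def)
    also have "\<dots> = (\<Sum>i\<in>{0..<M}. w i) + (\<Sum>i\<in>{M..<M+N}. w i)"
      by (simp add: sum.atLeastLessThan_concat atLeast0LessThan[symmetric])
    also have "\<dots> = \<beta> + of_nat N * (- \<beta> / of_nat N)"
      by (simp add: w_def L_def \<beta>_def atLeast0LessThan)
    also have "\<dots> = 0" using N1 by simp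
    finally show ?thesis .
  qed
  obtain n c where ci: "\<forall>j<L. (\<Sum>k\<in>{1..n}. c k * xx j ^ k) = t j"
    and cb: "\<forall>j\<ge>L. norm (\<Sum>k\<in>{1..n}. c k * xx j ^ k) \<le> \<eta> / real (Suc j)"
    using interp[OF L1(1) eta, of t] by blast
  define s where "s j = (\<Sum>k\<in>{1..n}. c k * xx j ^ k)" for j
  have DDs: "(\<Sum>k\<in>{1..n}. c k * DD k j) = s j - (if j = 0 then 0 else s (j - 1))" for j
    by (cases j) (simp_all add: DD_def s_def right_diff_distrib sum_subtractf)
  define E where "E j = b j - (\<Sum>k\<in>{1..n}. c k * DD k j)" for j
  define Aj where "Aj j = (if M \<le> j then norm (b j) else 0)" for j
  define Bj where "Bj j = (if M \<le> j \<and> j < L then norm \<beta> / real N else 0)" for j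
  define Cj where "Cj j = 3 * \<eta> / real (Suc j)" for j
  have A0: "Aj j \<ge> 0" and B0: "Bj j \<ge> 0" and C0: "Cj j \<ge> 0" for j
    using eta by (auto simp: Aj_def Bj_def Cj_def)
  have Ebound: "norm (E j) \<le> Aj j + Bj j + Cj j" for j
  proof (cases "j < L")
    case True
    have "s j - (if j = 0 then 0 else s (j - 1)) = t j - (if j = 0 then 0 else t (j - 1))"
      using ci True by (auto simp: s_def)
    also have "\<dots> = w j" by (cases j) (simp_all add: t_def)
    finally have Ew: "E j = b j - w j" unfolding E_def DDs by simp
    show ?thesis
    proof (cases "j < M")
      case True
      then show ?thesis using Ew A0 B0 C0 by (simp add: w_def add_nonneg_nonneg)
    next
      case False
      then have "E j = b j + \<beta> / of_nat N" using Ew \<open>j < L\<close> by (simp add: w_def)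
      then have "norm (E j) \<le> norm (b j) + norm \<beta> / real N"
        by (metis norm_triangle_ineq norm_divide norm_of_nat)
      then show ?thesis using False True C0[of j] by (simp add: Aj_def Bj_def)
    qed
  next
    case False
    have s1: "norm (s j) \<le> \<eta> / real (Suc j)" using cb False by (simp add: s_def)
    have s2: "norm (if j = 0 then 0 else s (j - 1)) \<le> 2 * \<eta> / real (Suc j)"
    proof (cases "j = L")
      case True
      then have "s (j - 1) = 0" using ci tL L1 by (simp add: s_def)
      then show ?thesis using eta by simp
    next
      case False2: False
      then have jL: "j - 1 \<ge> L" "j \<ge> 1" using False L1 by auto
      then have "norm (s (j - 1)) \<le> \<eta> / real (Suc (j - 1))" using cb unfolding s_def by blast
      also have "\<dots> = \<eta> / real j" using jL by simp
      also have "\<dots> \<le> 2 * \<eta> / real (Suc j)"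
        using jL eta by (simp add: field_simps)
      finally show ?thesis using jL by simp
    qed
    have "norm (E j) \<le> norm (b j) + norm (s j) + norm (if j = 0 then 0 else s (j - 1))"
    proof -
      have "norm (b j - (s j - (if j = 0 then 0 else s (j - 1)))) \<le> norm (b j) + norm (s j - (if j = 0 then 0 else s (j - 1)))"
        by (rule norm_triangle_ineq4)
      moreover have "norm (s j - (if j = 0 then 0 else s (j - 1))) \<le> norm (s j) + norm (if j = 0 then 0 else s (j - 1))"
        by (rule norm_triangle_ineq4)
      ultimately show ?thesis unfolding E_def DDs by linarith
    qed
    also have "\<dots> \<le> norm (b j) + \<eta> / real (Suc j) + 2 * \<eta> / real (Suc j)"
      using s1 s2 by simp
    also have "\<dots> = norm (b j) + (\<eta> + 2 * \<eta>) / real (Suc j)"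
      by (simp only: add_divide_distrib add.assoc)
    also have "\<dots> = Aj j + Cj j" using False L1 by (simp add: Aj_def Cj_def)
    finally show ?thesis using B0[of j] by simp
  qed
  define G where "G j = 3 * ((Aj j)\<^sup>2 + (Bj j)\<^sup>2 + (Cj j)\<^sup>2)" for j
  have EG: "(norm (E j))\<^sup>2 \<le> G j" for j
  proof -
    have "(norm (E j))\<^sup>2 \<le> (Aj j + Bj j + Cj j)\<^sup>2"
      using Ebound[of j] by (intro power_mono) auto
    also have "\<dots> \<le> G j" unfolding G_def
      by (rule sq3)
    finally show ?thesis .
  qed
  have sA: "(\<lambda>j. (Aj j)\<^sup>2) sums SM"
  proof -
    have "summable (\<lambda>i. (norm (b (i + M)))\<^sup>2)"
      by (rule summable_iff_shift[of "\<lambda>j. (norm (b j))\<^sup>2" M, THEN iffD2, OF sb])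
    then have "(\<lambda>i. (Aj (i + M))\<^sup>2) sums SM" unfolding SM_def Aj_def
      by (simp add: summable_sums)
    then have "(\<lambda>j. (Aj j)\<^sup>2) sums (SM + (\<Sum>i<M. (Aj i)\<^sup>2))" by (rule sums_iff_shift[THEN iffD1])
    then show ?thesis by (simp add: Aj_def)
  qed
  have sB: "(\<lambda>j. (Bj j)\<^sup>2) sums (real N * (norm \<beta> / real N)\<^sup>2)"
  proof -
    have "(\<lambda>j. (Bj j)\<^sup>2) sums (\<Sum>j\<in>{M..<L}. (Bj j)\<^sup>2)"
      by (rule sums_finite) (auto simp: Bj_def)
    also have "(\<Sum>j\<in>{M..<L}. (Bj j)\<^sup>2) = real N * (norm \<beta> / real N)\<^sup>2"
      by (simp add: Bj_def L_def)
    finally show ?thesis .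
  qed
  have sC: "(\<lambda>j. (Cj j)\<^sup>2) sums (9 * \<eta>\<^sup>2 * Z)"
  proof -
    have "(\<lambda>j. (9 * \<eta>\<^sup>2) * (1 / real (Suc j))\<^sup>2) sums ((9 * \<eta>\<^sup>2) * Z)"
      unfolding Z_def by (intro sums_mult summable_sums sZ)
    moreover have "(Cj j)\<^sup>2 = (9 * \<eta>\<^sup>2) * (1 / real (Suc j))\<^sup>2" for j
      by (simp add: Cj_def power2_eq_square)
    ultimately show ?thesis by simp
  qed
  have sG: "G sums (3 * (SM + real N * (norm \<beta> / real N)\<^sup>2 + 9 * \<eta>\<^sup>2 * Z))"
    unfolding G_def by (intro sums_mult sums_add sA sB sC)
  have val: "3 * (SM + real N * (norm \<beta> / real N)\<^sup>2 + 9 * \<eta>\<^sup>2 * Z) < e2"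
  proof -
    have eqN: "real N * (norm \<beta> / real N)\<^sup>2 = (norm \<beta>)\<^sup>2 / real N"
      using N1 by (simp add: power2_eq_square)
    have h: "3*(SM+X+W) < e2" if "SM < e2/9" "3*X < e2/3" "27*W \<le> e2/3" for W X :: real
      using that e2 by argo
    show ?thesis unfolding eqN by (rule h[OF SM NB etaZ])
  qed
  have sE: "summable (\<lambda>j. (norm (E j))\<^sup>2)"
    by (rule summable_comparison_test'[OF sums_summable[OF sG]]) (use EG in auto)
  have "(\<Sum>j. (norm (E j))\<^sup>2) \<le> (\<Sum>j. G j)"
    by (intro suminf_le sE sums_summable[OF sG] EG)
  also have "\<dots> < e2" using sG val sums_unique by metis
  finally show ?thesis using sE unfolding E_def e2_def by blast
qed


theorem mainTheorem12:
  assumes "f \<in> hardy2" and "(\<epsilon>::real) > 0"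
  shows "\<exists>(n::nat) (c::nat \<Rightarrow> complex).
           h2_norm (\<lambda>z. f z - (\<Sum>k\<in>{1..n}. c k * fk k z)) < \<epsilon>"
proof -
  have hol: "f holomorphic_on ball 0 1" and sb: "summable (\<lambda>j. (norm (taylor_coeff f j))\<^sup>2)"
    using assms(1) by (auto simp: hardy2_def)
  obtain n c where
    lt: "(\<Sum>j. (norm (taylor_coeff f j - (\<Sum>k\<in>{1..n}. c k * DD k j)))\<^sup>2) < \<epsilon>\<^sup>2"
    using core[OF sb assms(2)] by blast
  have tc: "taylor_coeff (\<lambda>z. f z - (\<Sum>k\<in>{1..n}. c k * fk k z)) j
      = taylor_coeff f j - (\<Sum>k\<in>{1..n}. c k * DD k j)" for j
  proof (rule coeff_from_sums)
    fix z :: complex assume z: "z \<in> ball 0 1"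
    have "(\<lambda>j. \<Sum>k\<in>{1..n}. c k * (DD k j * z ^ j)) sums (\<Sum>k\<in>{1..n}. c k * fk k z)"
      by (intro sums_sum sums_mult fk_sums z)
    from sums_diff[OF taylor_sums[OF hol z] this]
    show "(\<lambda>j. (taylor_coeff f j - (\<Sum>k\<in>{1..n}. c k * DD k j)) * z ^ j) sums
        (f z - (\<Sum>k\<in>{1..n}. c k * fk k z))"
      by (simp add: left_diff_distrib sum_distrib_right mult.assoc)
  qed
  have "h2_norm (\<lambda>z. f z - (\<Sum>k\<in>{1..n}. c k * fk k z))
      = sqrt (\<Sum>j. (norm (taylor_coeff f j - (\<Sum>k\<in>{1..n}. c k * DD k j)))\<^sup>2)"
    unfolding h2_norm_def tc ..
  also have "\<dots> < sqrt (\<epsilon>\<^sup>2)" using lt by (rule real_sqrt_less_mono)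
  also have "\<dots> = \<epsilon>" using assms(2) by simp
  finally show ?thesis by blast
qed

end
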